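(* Let $S$ be a random walk on $\mathbb{Z}^2$ with symmetric, sub-Gaussian increments and let $\mathsf c\in[1,\infty)$ be as in the context. For every $f:\mathbb{Z}^2\to\mathbb{R}$, $t\ge0$, $n\in\mathbb{N}$ and $p\in[1,\infty]$, $$\Big\|\frac{q^f_n}{w_t}\Big\|_{\ell^p}\le\mathsf c\,e^{2\mathsf ct^2n}\Big\|\frac f{w_t}\Big\|_{\ell^p},\qquad\Big\|\frac{q^f_n}{w_t}\Big\|_{\ell^\infty}\le\frac{\mathsf c\,e^{2\mathsf ct^2n}}{n^{1/p}}\Big\|\frac f{w_t}\Big\|_{\ell^p},$$ with the convention $n^{1/\infty}:=1$.
   Context: Assumption on the walk: $q_1(x)=q_1(-x)$ and there is $c>0$ with $\sum_xe^{tx^a}q_1(x)\le e^{ct^2/2}$ for all $t\in\mathbb{R}$, $a=1,2$. Here $q_n(x):=\mathrm{P}(S_n=x\mid S_0=0)$, $q^f_n(x):=\sum_{z\in\mathbb{Z}^2}q_n(x-z)f(z)$, $w_t(x):=e^{-t|x|}$, and $\|\cdot\|_{\ell^p}$ is the $\ell^p(\mathbb{Z}^2)$ norm. $\mathsf c\in[1,\infty)$ is a constant (depending only on the walk) such that for all $t\ge0$, $n\in\mathbb{N}$, $a=1,2$: $\sum_xe^{tx^a}q_n(x)\le e^{\mathsf ct^2n/2}$, $\sum_xe^{tx^a}q_n(x)^2/q_{2n}(0)\le e^{\mathsf ct^2n/2}$, $\sum_xe^{t|x|}q_n(x)\le\mathsf ce^{2\mathsf ct^2n}$, $\sup_xe^{t|x|}q_n(x)\le\mathsf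 ce^{2\mathsf ct^2n}/n$ (such a constant exists). *)

theory Defs
  imports "HOL-Analysis.Analysis"
begin

type_synonym z2 = "int \<times> int"

definition enorm2 :: "z2 \<Rightarrow> real" where
  "enorm2 x = sqrt (real_of_int (fst x) ^ 2 + real_of_int (snd x) ^ 2)"

text \<open>n-step transition probabilities q_n(x) = P(S_n = x | S_0 = 0) of the walk
  with one-step law q1 (n-fold convolution of q1).\<close>
fun qn :: "(z2 \<Rightarrow> real) \<Rightarrow> nat \<Rightarrow> z2 \<Rightarrow> real" where
  "qn q1 0 = (\<lambda>x. if x = 0 then 1 else 0)"
| "qn q1 (Suc n) = (\<lambda>x. infsum (\<lambda>z. qn q1 n (x - z) * q1 z) UNIV)"

definition qnf :: "(z2 \<Rightarrow> real) \<Rightarrow> nat \<Rightarrow> (z2 \<Rightarrow> real) \<Rightarrow> z2 \<Rightarrow> real" where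
  "qnf q1 n f x = infsum (\<lambda>z. qn q1 n (x - z) * f z) UNIV"

definition wt :: "real \<Rightarrow> z2 \<Rightarrow> real" where
  "wt t x = exp (- t * enorm2 x)"

definition lp_norm :: "ennreal \<Rightarrow> (z2 \<Rightarrow> real) \<Rightarrow> ennreal" where
  "lp_norm p g =
     (if p = \<infinity> then (SUP x. ennreal \<bar>g x\<bar>)
      else (let s = (nn_integral (count_space UNIV) (\<lambda>x. ennreal (\<bar>g x\<bar> powr enn2real p)))
            in if s = \<infinity> then \<infinity> else ennreal (enn2real s powr (1 / enn2real p))))"

definition root_p :: "nat \<Rightarrow> ennreal \<Rightarrow> real" where
  "root_p n p = (if p = \<infinity> then 1 else real n powr (1 / enn2real p))"

end

theory Submission
  imports Defs "HOL-Analysis.Analysis"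
begin


lemma qn_nonneg:
  assumes "\<forall>x. 0 \<le> q1 x"
  shows "0 \<le> qn q1 n x"
proof (induction n arbitrary: x)
  case 0 then show ?case by simp
next
  case (Suc n) then show ?case using assms by (simp del: split_paired_All add: infsum_nonneg)
qed

lemma abs_infsum_le_nn:
  fixes h :: "'a \<Rightarrow> real"
  shows "ennreal \<bar>infsum h UNIV\<bar> \<le> (\<integral>\<^sup>+x. ennreal \<bar>h x\<bar> \<partial>count_space UNIV)"
proof (cases "h summable_on UNIV")
  case True
  then have a: "Infinite_Sum.abs_summable_on h UNIV"
    using summable_on_iff_abs_summable_on_real by blast
  then have b: "Infinite_Set_Sum.abs_summable_on h UNIV" using abs_summable_equivalent by blast
  have c: "Infinite_Set_Sum.abs_summable_on (\<lambda>x. \<bar>h x\<bar>) UNIV" using b by (simp add: abs_summable_on_def)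
  have "\<bar>infsum h UNIV\<bar> \<le> infsum (\<lambda>x. \<bar>h x\<bar>) UNIV"
    using norm_infsum_bound[OF a] by simp
  also have "\<dots> = infsetsum (\<lambda>x. \<bar>h x\<bar>) UNIV" using infsetsum_infsum[OF c] by simp
  finally have "ennreal \<bar>infsum h UNIV\<bar> \<le> ennreal (infsetsum (\<lambda>x. \<bar>h x\<bar>) UNIV)"
    by (rule ennreal_leI)
  also have "\<dots> = (\<integral>\<^sup>+x. ennreal \<bar>h x\<bar> \<partial>count_space UNIV)"
    using nn_integral_conv_infsetsum[OF c] by simp
  finally show ?thesis .
next
  case False
  then show ?thesis by (simp add: infsum_not_exists)
qed

lemma enorm2_eq: "enorm2 x = norm (real_of_int (fst x), real_of_int (snd x))"
  by (simp add: enorm2_def norm_Pair)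

lemma enorm2_nonneg: "0 \<le> enorm2 x" by (simp add: enorm2_def)

lemma enorm2_triangle: "enorm2 x \<le> enorm2 (x - z) + enorm2 z"
proof -
  have "(real_of_int (fst x), real_of_int (snd x)) =
        (real_of_int (fst (x - z)), real_of_int (snd (x - z))) + (real_of_int (fst z), real_of_int (snd z))"
    by simp
  then show ?thesis unfolding enorm2_eq by (metis norm_triangle_ineq)
qed

lemma young_pt:
  fixes g a r :: real
  assumes "0 \<le> g" "0 < a" "1 \<le> r"
  shows "g * a powr (r-1) \<le> g powr r / r + (r-1)/r * a powr r"
proof (cases "r = 1")
  case True then show ?thesis using assms by simp
next
  case False
  then have r1: "r > 1" using assms by simp
  define q where "q = r / (r - 1)"
  have q1: "q > 1" using r1 by (simp add: q_def)
  have pq: "1/r + 1/q = 1" using r1 by (simp add: q_def field_simps)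
  have "g * a powr (r-1) \<le> g powr r / r + (a powr (r-1)) powr q / q"
    using Youngs_inequality[OF r1 q1 pq assms(1)] by simp
  also have "(a powr (r-1)) powr q = a powr r"
    using r1 by (simp add: powr_powr q_def)
  also have "a powr r / q = (r-1)/r * a powr r" by (simp add: q_def)
  finally show ?thesis .
qed

lemma shift_nn:
  fixes F :: "z2 \<Rightarrow> ennreal"
  shows "(\<integral>\<^sup>+z. F (x - z) \<partial>count_space UNIV) = (\<integral>\<^sup>+y. F y \<partial>count_space UNIV)"
proof -
  have "bij_betw (\<lambda>z. x - z) UNIV UNIV"
    by (rule bij_betwI[where g="\<lambda>z. x - z"]) auto
  then show ?thesis by (rule nn_integral_bij_count_space)
qed

lemma swap_nn:
  fixes F :: "z2 \<Rightarrow> z2 \<Rightarrow> ennreal"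
  shows "(\<integral>\<^sup>+x. (\<integral>\<^sup>+z. F x z \<partial>count_space UNIV) \<partial>count_space UNIV) =
         (\<integral>\<^sup>+z. (\<integral>\<^sup>+x. F x z \<partial>count_space UNIV) \<partial>count_space UNIV)"
  by (rule nn_integral_count_space_nn_integral) auto



lemma ennreal_lin:
  fixes a b c d :: real
  assumes "0 \<le> a" "0 \<le> b" "0 \<le> c" "0 \<le> d"
  shows "ennreal a * ennreal b + ennreal c * ennreal d = ennreal (a*b + c*d)"
  using assms by (simp add: ennreal_mult ennreal_plus)

lemma jensen_cs:
  fixes k g :: "'a \<Rightarrow> real" and r K T :: real
  assumes k0: "\<And>x. 0 \<le> k x" and g0: "\<And>x. 0 \<le> g x" and r1: "1 \<le> r"
    and hK: "(\<integral>\<^sup>+x. ennreal (k x) \<partial>count_space UNIV) = ennreal K" and K0: "0 \<le> K"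
    and hT: "(\<integral>\<^sup>+x. ennreal (k x * g x powr r) \<partial>count_space UNIV) \<le> ennreal T" and T0: "0 \<le> T"
  shows "\<exists>M\<ge>0. (\<integral>\<^sup>+x. ennreal (k x * g x) \<partial>count_space UNIV) = ennreal M \<and> M powr r \<le> K powr (r-1) * T"
proof (cases "K = 0")
  case True
  then have "(\<integral>\<^sup>+x. ennreal (k x) \<partial>count_space UNIV) = 0" using hK by simp
  then have "\<forall>x. k x = 0" using k0
    by (simp add: nn_integral_0_iff_AE AE_count_space)
  then have "(\<integral>\<^sup>+x. ennreal (k x * g x) \<partial>count_space UNIV) = ennreal 0" by simp
  then show ?thesis by (intro exI[of _ 0]) (simp add: True)
next
  case False
  then have Kp: "K > 0" using K0 by simp
  define m where "m = (\<integral>\<^sup>+x. ennreal (k x * g x) \<partial>count_space UNIV)"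
  have key: "ennreal (a powr (r-1)) * m \<le> ennreal (T/r + (r-1)/r * a powr r * K)" if a: "a > 0" for a
  proof -
    have "ennreal (a powr (r-1)) * m = (\<integral>\<^sup>+x. ennreal (a powr (r-1)) * ennreal (k x * g x) \<partial>count_space UNIV)"
      unfolding m_def by (simp add: nn_integral_cmult)
    also have "\<dots> \<le> (\<integral>\<^sup>+x. ennreal (k x * g x powr r) * ennreal (1/r) + ennreal ((r-1)/r * a powr r) * ennreal (k x) \<partial>count_space UNIV)"
    proof (rule nn_integral_mono)
      fix x
      have "k x * (g x * a powr (r-1)) \<le> k x * (g x powr r / r + (r-1)/r * a powr r)"
        using young_pt[OF g0 a r1] k0 by (rule mult_left_mono)
      then have "a powr (r-1) * (k x * g x) \<le> k x * g x powr r * (1/r) + (r-1)/r * a powr r * k x"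
        by (simp add: algebra_simps)
      then have E: "ennreal (a powr (r-1) * (k x * g x)) \<le> ennreal (k x * g x powr r * (1/r) + (r-1)/r * a powr r * k x)"
        by (rule ennreal_leI)
      show "ennreal (a powr (r-1)) * ennreal (k x * g x) \<le> ennreal (k x * g x powr r) * ennreal (1/r) + ennreal ((r-1)/r * a powr r) * ennreal (k x)"
      proof -
        have "ennreal (a powr (r-1)) * ennreal (k x * g x) = ennreal (a powr (r-1) * (k x * g x))"
          by (rule ennreal_mult[symmetric]) (simp_all add: k0 g0)
        moreover have "ennreal (k x * g x powr r) * ennreal (1/r) + ennreal ((r-1)/r * a powr r) * ennreal (k x)
            = ennreal (k x * g x powr r * (1/r) + (r-1)/r * a powr r * k x)"
          by (rule ennreal_lin) (use k0 r1 in auto)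
        ultimately show ?thesis using E by simp
      qed
    qed
    also have "\<dots> = (\<integral>\<^sup>+x. ennreal (k x * g x powr r) \<partial>count_space UNIV) * ennreal (1/r) + ennreal ((r-1)/r * a powr r) * (\<integral>\<^sup>+x. ennreal (k x) \<partial>count_space UNIV)"
      by (simp add: nn_integral_add nn_integral_multc nn_integral_cmult)
    also have "\<dots> \<le> ennreal T * ennreal (1/r) + ennreal ((r-1)/r * a powr r) * ennreal K"
      using hT hK by (intro add_mono mult_right_mono) auto
    also have "\<dots> = ennreal (T/r + (r-1)/r * a powr r * K)"
      using T0 K0 r1 by (subst ennreal_lin) (auto simp: divide_simps)
    finally show ?thesis .
  qed
  have "m \<le> ennreal (T/r + (r-1)/r * 1 powr r * K)" using key[of 1] by simp
  then have mfin: "m < \<infinity>" by (simp add: order_le_less_trans)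
  define M where "M = enn2real m"
  have mM: "m = ennreal M" unfolding M_def using mfin by simp
  have M0: "0 \<le> M" unfolding M_def by simp
  show ?thesis
  proof (cases "M = 0")
    case True
    then have "(\<integral>\<^sup>+x. ennreal (k x * g x) \<partial>count_space UNIV) = ennreal 0" using mM m_def by simp
    moreover have "(0::real) powr r \<le> K powr (r-1) * T" using K0 T0 by simp
    ultimately show ?thesis by blast
  next
    case False
    then have Mp: "M > 0" using M0 by simp
    define a where "a = M / K"
    have ap: "a > 0" unfolding a_def using Mp Kp by simp
    have "ennreal (a powr (r-1) * M) \<le> ennreal (T/r + (r-1)/r * a powr r * K)"
      using key[OF ap] mM M0 by (simp add: ennreal_mult)
    then have ineq: "a powr (r-1) * M \<le> T/r + (r-1)/r * a powr r * K"
      using T0 K0 r1 ap by (subst (asm) ennreal_le_iff) (auto intro!: add_nonneg_nonneg mult_nonneg_nonneg)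
    define X where "X = M powr r / K powr (r-1)"
    have e1: "a powr (r-1) * M = X"
    proof -
      have "a powr (r-1) * M = M powr (r-1) * M / K powr (r-1)"
        unfolding a_def using Mp Kp by (simp add: powr_divide)
      also have "M powr (r-1) * M = M powr r"
        using Mp by (simp add: powr_diff)
      finally show ?thesis unfolding X_def .
    qed
    have e2: "a powr r * K = X"
    proof -
      have "a powr r * K = M powr r / (K powr r / K)"
        unfolding a_def using Mp Kp by (simp add: powr_divide)
      also have "K powr r / K = K powr (r-1)"
        using Kp by (simp add: powr_diff)
      finally show ?thesis unfolding X_def .
    qed
    have "X \<le> T/r + (r-1)/r * X" using ineq unfolding e1 mult.assoc[symmetric] by (simp only: mult.assoc e2)
    then have "X / r \<le> T / r" using r1 by (simp add: field_simps)
    then have "X \<le> T" using r1 by (simp add: divide_le_cancel)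
    then have "M powr r \<le> K powr (r-1) * T"
      unfolding X_def using Kp by (simp add: divide_le_eq mult.commute)
    then show ?thesis using mM M0 unfolding m_def by blast
  qed
qed



lemma shift_nn2:
  fixes F :: "z2 \<Rightarrow> ennreal"
  shows "(\<integral>\<^sup>+x. F (x - z) \<partial>count_space UNIV) = (\<integral>\<^sup>+y. F y \<partial>count_space UNIV)"
proof -
  have "bij_betw (\<lambda>x. x - z) UNIV UNIV"
    by (rule bij_betwI[where g="\<lambda>x. x + z"]) auto
  then show ?thesis by (rule nn_integral_bij_count_space)
qed

lemma wt_pos: "0 < wt t x" by (simp add: wt_def)

lemma step1:
  fixes q1 f :: "z2 \<Rightarrow> real"
  assumes q0: "\<forall>x. 0 \<le> q1 x" and t0: "0 \<le> t"
  shows "ennreal \<bar>qnf q1 n f x / wt t x\<bar> \<le>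
    (\<integral>\<^sup>+z. ennreal (exp (t * enorm2 (x - z)) * qn q1 n (x - z) * (\<bar>f z\<bar> / wt t z)) \<partial>count_space UNIV)"
proof -
  have w: "wt t x > 0" by (rule wt_pos)
  have "ennreal \<bar>qnf q1 n f x / wt t x\<bar> = ennreal \<bar>qnf q1 n f x\<bar> * ennreal (1 / wt t x)"
    using w by (simp add: abs_divide ennreal_mult[symmetric])
  also have "\<dots> \<le> (\<integral>\<^sup>+z. ennreal \<bar>qn q1 n (x - z) * f z\<bar> \<partial>count_space UNIV) * ennreal (1 / wt t x)"
    unfolding qnf_def by (intro mult_right_mono abs_infsum_le_nn) simp
  also have "\<dots> = (\<integral>\<^sup>+z. ennreal \<bar>qn q1 n (x - z) * f z\<bar> * ennreal (1 / wt t x) \<partial>count_space UNIV)"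
    by (simp add: nn_integral_multc)
  also have "\<dots> \<le> (\<integral>\<^sup>+z. ennreal (exp (t * enorm2 (x - z)) * qn q1 n (x - z) * (\<bar>f z\<bar> / wt t z)) \<partial>count_space UNIV)"
  proof (rule nn_integral_mono)
    fix z
    have qz: "0 \<le> qn q1 n (x - z)" using qn_nonneg[OF q0] .
    have "t * enorm2 x \<le> t * enorm2 (x - z) + t * enorm2 z"
      using enorm2_triangle[of x z] t0 by (metis distrib_left mult_left_mono)
    then have e: "exp (t * enorm2 x) \<le> exp (t * enorm2 (x - z)) * exp (t * enorm2 z)"
      by (simp add: exp_add[symmetric])
    have "\<bar>qn q1 n (x - z) * f z\<bar> * (1 / wt t x) = qn q1 n (x - z) * \<bar>f z\<bar> * exp (t * enorm2 x)"
      using qz by (simp add: wt_def abs_mult exp_minus field_simps)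
    also have "\<dots> \<le> qn q1 n (x - z) * \<bar>f z\<bar> * (exp (t * enorm2 (x - z)) * exp (t * enorm2 z))"
      using qz e by (intro mult_left_mono) auto
    also have "\<dots> = exp (t * enorm2 (x - z)) * qn q1 n (x - z) * (\<bar>f z\<bar> / wt t z)"
      by (simp add: wt_def exp_minus field_simps)
    finally have "ennreal (\<bar>qn q1 n (x - z) * f z\<bar> * (1 / wt t x)) \<le> ennreal (exp (t * enorm2 (x - z)) * qn q1 n (x - z) * (\<bar>f z\<bar> / wt t z))"
      by (rule ennreal_leI)
    then show "ennreal \<bar>qn q1 n (x - z) * f z\<bar> * ennreal (1 / wt t x) \<le> ennreal (exp (t * enorm2 (x - z)) * qn q1 n (x - z) * (\<bar>f z\<bar> / wt t z))"
      using w by (simp add: ennreal_mult[symmetric])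
  qed
  finally show ?thesis .
qed



theorem lemma4p17:
  fixes q1 :: "z2 \<Rightarrow> real" and c :: real
    and f :: "z2 \<Rightarrow> real" and t :: real and n :: nat and p :: ennreal
  assumes q1_nonneg: "\<forall>x. 0 \<le> q1 x"
    and q1_prob: "(q1 has_sum 1) UNIV"
    and q1_sym: "\<forall>x. q1 x = q1 (- x)"
    and q1_subgauss: "\<exists>c0>0. \<forall>s::real. \<forall>\<pi>\<in>{fst, snd}.
          (nn_integral (count_space UNIV) (\<lambda>x. ennreal (exp (s * real_of_int (\<pi> x)) * q1 x))) \<le> ennreal (exp (c0 * s^2 / 2))"
    and c_ge1: "1 \<le> c"
    and c1: "\<forall>s\<ge>0. \<forall>m\<ge>1. \<forall>\<pi>\<in>{fst, snd}.
          (nn_integral (count_space UNIV) (\<lambda>x. ennreal (exp (s * real_of_int (\<pi> x)) * qn q1 m x)))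
            \<le> ennreal (exp (c * s^2 * real m / 2))"
    and c2: "\<forall>s\<ge>0. \<forall>m\<ge>1. \<forall>\<pi>\<in>{fst, snd}.
          (nn_integral (count_space UNIV) (\<lambda>x. ennreal (exp (s * real_of_int (\<pi> x)) * qn q1 m x ^ 2 / qn q1 (2 * m) 0)))
            \<le> ennreal (exp (c * s^2 * real m / 2))"
    and c3: "\<forall>s\<ge>0. \<forall>m\<ge>1.
          (nn_integral (count_space UNIV) (\<lambda>x. ennreal (exp (s * enorm2 x) * qn q1 m x)))
            \<le> ennreal (c * exp (2 * c * s^2 * real m))"
    and c4: "\<forall>s\<ge>0. \<forall>m\<ge>1. \<forall>x.
          exp (s * enorm2 x) * qn q1 m x \<le> c * exp (2 * c * s^2 * real m) / real m"
    and t_nonneg: "0 \<le> t"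
    and n_pos: "1 \<le> n"
    and p_ge1: "1 \<le> p"
  shows "lp_norm p (\<lambda>x. qnf q1 n f x / wt t x)
           \<le> ennreal (c * exp (2 * c * t^2 * real n)) * lp_norm p (\<lambda>x. f x / wt t x)
       \<and> lp_norm \<infinity> (\<lambda>x. qnf q1 n f x / wt t x)
           \<le> ennreal (c * exp (2 * c * t^2 * real n) / root_p n p) * lp_norm p (\<lambda>x. f x / wt t x)"
proof -
  define C where "C = c * exp (2 * c * t^2 * real n)"
  have Cp: "C > 0" unfolding C_def using c_ge1 by simp
  define G where "G z = \<bar>f z\<bar> / wt t z" for z
  define K where "K y = exp (t * enorm2 y) * qn q1 n y" for y
  have G0: "0 \<le> G z" for z unfolding G_def using wt_pos[of t z] by simp
  have K0: "0 \<le> K y" for y unfolding K_def using qn_nonneg[OF q1_nonneg] by simp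
  have Gabs: "\<bar>f z / wt t z\<bar> = G z" for z unfolding G_def using wt_pos[of t z] by (simp add: abs_divide)
  have intK: "(\<integral>\<^sup>+y. ennreal (K y) \<partial>count_space UNIV) \<le> ennreal C"
    using c3 t_nonneg n_pos unfolding K_def C_def by auto
  have Kle: "K y \<le> C / real n" for y
    using c4[rule_format, OF t_nonneg n_pos, of y] unfolding K_def C_def .
  define H where "H x = (\<integral>\<^sup>+z. ennreal (K (x - z) * G z) \<partial>count_space UNIV)" for x
  have step: "ennreal \<bar>qnf q1 n f x / wt t x\<bar> \<le> H x" for x
    using step1[OF q1_nonneg t_nonneg, of n f x] unfolding H_def K_def G_def by (simp add: mult.assoc)
  have intKx: "(\<integral>\<^sup>+z. ennreal (K (x - z)) \<partial>count_space UNIV) \<le> ennreal C" for x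
    using intK shift_nn[of "\<lambda>y. ennreal (K y)" x] by simp
  have intKz: "(\<integral>\<^sup>+x. ennreal (K (x - z)) \<partial>count_space UNIV) \<le> ennreal C" for z
    using intK shift_nn2[of "\<lambda>y. ennreal (K y)" z] by simp
  show ?thesis
  proof (cases "p = \<infinity>")
    case True
    define Gs where "Gs = (SUP z. ennreal (G z))"
    have lpf: "lp_norm p (\<lambda>x. f x / wt t x) = Gs" unfolding lp_norm_def Gs_def Gabs using True by simp
    have Hle: "H x \<le> ennreal C * Gs" for x
    proof -
      have "H x \<le> (\<integral>\<^sup>+z. ennreal (K (x - z)) * Gs \<partial>count_space UNIV)"
        unfolding H_def
      proof (rule nn_integral_mono)
        fix z
        have "ennreal (G z) \<le> Gs" unfolding Gs_def by (rule SUP_upper) simp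
        then show "ennreal (K (x - z) * G z) \<le> ennreal (K (x - z)) * Gs"
          using K0 G0 by (simp add: ennreal_mult mult_left_mono)
      qed
      also have "\<dots> = (\<integral>\<^sup>+z. ennreal (K (x - z)) \<partial>count_space UNIV) * Gs"
        by (simp add: nn_integral_multc)
      also have "\<dots> \<le> ennreal C * Gs"
        using intKx by (rule mult_right_mono) simp
      finally show ?thesis .
    qed
    have main: "lp_norm \<infinity> (\<lambda>x. qnf q1 n f x / wt t x) \<le> ennreal C * Gs"
      unfolding lp_norm_def by (simp only: simp_thms if_True) (rule SUP_least, rule order_trans[OF step Hle])
    have "root_p n p = 1" unfolding root_p_def using True by simp
    then show ?thesis using main True lpf unfolding C_def by simp
  next
    case False
    define r where "r = enn2real p"
    have pr: "p = ennreal r" unfolding r_def using False by (simp add: less_top)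
    have r1: "1 \<le> r" unfolding r_def using enn2real_mono[OF p_ge1] False by (simp add: less_top)
    have r0: "0 < r" using r1 by simp
    define S where "S = (\<integral>\<^sup>+z. ennreal (G z powr r) \<partial>count_space UNIV)"
    have lpf: "lp_norm p (\<lambda>x. f x / wt t x) = (if S = \<infinity> then \<infinity> else ennreal (enn2real S powr (1 / r)))"
      unfolding lp_norm_def S_def Gabs using False by (simp add: r_def Let_def)
    have rootp: "root_p n p = real n powr (1/r)" unfolding root_p_def r_def using False by simp
    have rootpos: "root_p n p > 0" unfolding rootp using n_pos by simp
    show ?thesis
    proof (cases "S = \<infinity>")
      case True
      then have "lp_norm p (\<lambda>x. f x / wt t x) = \<infinity>" using lpf by simp
      moreover have "ennreal C \<noteq> 0" "ennreal (C / root_p n p) \<noteq> 0" using Cp rootpos by auto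
      ultimately show ?thesis unfolding C_def[symmetric] by simp
    next
      case False
      define Sr where "Sr = enn2real S"
      have SSr: "S = ennreal Sr" unfolding Sr_def using False by (simp add: less_top)
      have Sr0: "0 \<le> Sr" unfolding Sr_def by simp
      have lpf2: "lp_norm p (\<lambda>x. f x / wt t x) = ennreal (Sr powr (1/r))"
        using lpf False unfolding Sr_def by simp
      define Tx where "Tx x = (\<integral>\<^sup>+z. ennreal (K (x - z) * G z powr r) \<partial>count_space UNIV)" for x
      have Txle: "Tx x \<le> ennreal (C / real n * Sr)" for x
      proof -
        have "Tx x \<le> (\<integral>\<^sup>+z. ennreal (C / real n) * ennreal (G z powr r) \<partial>count_space UNIV)"
          unfolding Tx_def
        proof (rule nn_integral_mono)
          fix z
          have "K (x - z) * G z powr r \<le> C / real n * G z powr r"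
            using Kle by (intro mult_right_mono) auto
          then have le: "ennreal (K (x - z) * G z powr r) \<le> ennreal (C / real n * G z powr r)"
            by (rule ennreal_leI)
          have e: "ennreal (C / real n) * ennreal (G z powr r) = ennreal (C / real n * G z powr r)"
            by (rule ennreal_mult[symmetric]) (use Cp in simp_all)
          show "ennreal (K (x - z) * G z powr r) \<le> ennreal (C / real n) * ennreal (G z powr r)"
            unfolding e by (rule le)
        qed
        also have "\<dots> = ennreal (C / real n) * S" unfolding S_def by (simp add: nn_integral_cmult)
        also have "\<dots> = ennreal (C / real n * Sr)" unfolding SSr by (rule ennreal_mult[symmetric]) (use Cp Sr0 in simp_all)
        finally show ?thesis .
      qed
      define Tr where "Tr x = enn2real (Tx x)" for x
      have TxTr: "Tx x = ennreal (Tr x)" for x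
      proof -
        have "Tx x < top" using Txle[of x] by (simp add: order_le_less_trans)
        then show ?thesis unfolding Tr_def by simp
      qed
      have Tr0: "0 \<le> Tr x" for x unfolding Tr_def by simp
      have TrB: "Tr x \<le> C / real n * Sr" for x
        using Txle[of x] TxTr[of x] Cp Sr0 by simp
      have "\<exists>M\<ge>0. H x = ennreal M \<and> M powr r \<le> C powr (r-1) * Tr x" for x
      proof -
        define Kt where "Kt = enn2real (\<integral>\<^sup>+z. ennreal (K (x - z)) \<partial>count_space UNIV)"
        have hK: "(\<integral>\<^sup>+z. ennreal (K (x - z)) \<partial>count_space UNIV) = ennreal Kt"
        proof -
          have "(\<integral>\<^sup>+z. ennreal (K (x - z)) \<partial>count_space UNIV) < top" using intKx[of x] by (simp add: order_le_less_trans)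
          then show ?thesis unfolding Kt_def by simp
        qed
        have Kt0: "0 \<le> Kt" unfolding Kt_def by simp
        have KtC: "Kt \<le> C" using intKx[of x] hK Cp by simp
        obtain M where M: "M \<ge> 0" "H x = ennreal M" "M powr r \<le> Kt powr (r-1) * Tr x"
          using jensen_cs[of "\<lambda>z. K (x - z)" G r Kt "Tr x", OF K0 G0 r1 hK Kt0 _ Tr0]
            TxTr[of x] unfolding Tx_def H_def by auto
        have "Kt powr (r-1) * Tr x \<le> C powr (r-1) * Tr x"
          using Kt0 KtC r1 Tr0 by (intro mult_right_mono powr_mono2) auto
        then show ?thesis using M by force
      qed
      then obtain M where M: "\<And>x. M x \<ge> 0" "\<And>x. H x = ennreal (M x)" "\<And>x. M x powr r \<le> C powr (r-1) * Tr x"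
        by metis
      have absM: "\<bar>qnf q1 n f x / wt t x\<bar> \<le> M x" for x
        using step[of x] M(1,2)[of x] by simp
      have Mb: "M x \<le> C / root_p n p * Sr powr (1/r)" for x
      proof -
        have "M x powr r \<le> C powr (r-1) * (C / real n * Sr)"
          using M(3)[of x] TrB[of x] Cp by (meson order_trans mult_left_mono powr_ge_zero)
        also have "\<dots> = C powr r / real n * Sr"
          using Cp by (simp add: powr_diff)
        finally have a: "M x powr r \<le> C powr r / real n * Sr" .
        have "M x = (M x powr r) powr (1/r)" using M(1)[of x] r0 by (simp add: powr_powr)
        also have "\<dots> \<le> (C powr r / real n * Sr) powr (1/r)"
          using a r0 by (intro powr_mono2) auto
        also have "\<dots> = C / root_p n p * Sr powr (1/r)"
          unfolding rootp using Cp Sr0 r0 n_pos by (simp add: powr_mult powr_divide powr_powr)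
        finally show ?thesis .
      qed
      have main2: "lp_norm \<infinity> (\<lambda>x. qnf q1 n f x / wt t x) \<le> ennreal (C / root_p n p) * lp_norm p (\<lambda>x. f x / wt t x)"
      proof -
        have "lp_norm \<infinity> (\<lambda>x. qnf q1 n f x / wt t x) \<le> ennreal (C / root_p n p * Sr powr (1/r))"
          unfolding lp_norm_def by (simp only: simp_thms if_True) (rule SUP_least, rule ennreal_leI, rule order_trans[OF absM Mb])
        also have "\<dots> = ennreal (C / root_p n p) * lp_norm p (\<lambda>x. f x / wt t x)"
          unfolding lpf2 by (rule ennreal_mult) (use Cp rootpos in simp_all)
        finally show ?thesis .
      qed
      define U where "U = (\<integral>\<^sup>+x. ennreal (\<bar>qnf q1 n f x / wt t x\<bar> powr r) \<partial>count_space UNIV)"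
      have inner: "(\<integral>\<^sup>+x. Tx x \<partial>count_space UNIV) \<le> ennreal C * S"
      proof -
        have "(\<integral>\<^sup>+x. Tx x \<partial>count_space UNIV) = (\<integral>\<^sup>+z. (\<integral>\<^sup>+x. ennreal (K (x - z) * G z powr r) \<partial>count_space UNIV) \<partial>count_space UNIV)"
          unfolding Tx_def by (rule swap_nn)
        also have "\<dots> = (\<integral>\<^sup>+z. (\<integral>\<^sup>+x. ennreal (K (x - z)) \<partial>count_space UNIV) * ennreal (G z powr r) \<partial>count_space UNIV)"
          by (intro nn_integral_cong) (simp add: ennreal_mult'' nn_integral_multc)
        also have "\<dots> \<le> (\<integral>\<^sup>+z. ennreal C * ennreal (G z powr r) \<partial>count_space UNIV)"
          by (rule nn_integral_mono, rule mult_right_mono[OF intKz]) simp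
        also have "\<dots> = ennreal C * S" unfolding S_def by (simp add: nn_integral_cmult)
        finally show ?thesis .
      qed
      have Cr: "C powr (r-1) * C = C powr r" using Cp by (simp add: powr_diff)
      have Ule: "U \<le> ennreal (C powr r * Sr)"
      proof -
        have "U \<le> (\<integral>\<^sup>+x. ennreal (C powr (r-1)) * Tx x \<partial>count_space UNIV)"
          unfolding U_def
        proof (rule nn_integral_mono)
          fix x
          have "\<bar>qnf q1 n f x / wt t x\<bar> powr r \<le> M x powr r"
            using absM[of x] r0 by (intro powr_mono2) auto
          also have "\<dots> \<le> C powr (r-1) * Tr x" by (rule M(3))
          finally show "ennreal (\<bar>qnf q1 n f x / wt t x\<bar> powr r) \<le> ennreal (C powr (r-1)) * Tx x"
            unfolding TxTr ennreal_mult[symmetric, OF powr_ge_zero Tr0] by (rule ennreal_leI)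
        qed
        also have "\<dots> = ennreal (C powr (r-1)) * (\<integral>\<^sup>+x. Tx x \<partial>count_space UNIV)"
          by (simp add: nn_integral_cmult)
        also have "\<dots> \<le> ennreal (C powr (r-1)) * (ennreal C * S)"
          by (rule mult_left_mono[OF inner]) simp
        also have "ennreal (C powr (r-1)) * (ennreal C * S) = ennreal (C powr (r-1) * (C * Sr))"
          unfolding SSr using Cp Sr0 by (simp add: ennreal_mult)
        also have "\<dots> = ennreal (C powr r * Sr)"
          by (simp add: mult.assoc[symmetric] Cr)
        finally show ?thesis .
      qed
      have Ult: "U < top" using Ule by (simp add: order_le_less_trans)
      then have Ufin: "U \<noteq> \<infinity>" by simp
      have Ur: "enn2real U \<le> C powr r * Sr"
        using enn2real_mono[OF Ule ennreal_less_top] Cp Sr0 by simp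
      have main1: "lp_norm p (\<lambda>x. qnf q1 n f x / wt t x) \<le> ennreal C * lp_norm p (\<lambda>x. f x / wt t x)"
      proof -
        have "lp_norm p (\<lambda>x. qnf q1 n f x / wt t x) = ennreal (enn2real U powr (1/r))"
          unfolding lp_norm_def Let_def r_def[symmetric] U_def[symmetric] using \<open>p \<noteq> \<infinity>\<close> Ufin by simp
        also have "\<dots> \<le> ennreal ((C powr r * Sr) powr (1/r))"
          using Ur r0 by (intro ennreal_leI powr_mono2) auto
        also have "(C powr r * Sr) powr (1/r) = C * Sr powr (1/r)"
          using Cp Sr0 r0 by (simp add: powr_mult powr_powr)
        also have "ennreal (C * Sr powr (1/r)) = ennreal C * lp_norm p (\<lambda>x. f x / wt t x)"
          unfolding lpf2 by (rule ennreal_mult) (use Cp in simp_all)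
        finally show ?thesis .
      qed
      show ?thesis using main1 main2 unfolding C_def by simp
    qed
  qed
qed


end
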